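(* Let $V\subseteq\mathbb{A}^n$ be an affine variety defined over $\mathbb{Z}$. Then, with the emerging metric on finite prime fields described in the context, $\mathsf{lm}^{\mathrm{loc}}V(\mathrm{F}_q)=\overline{V(\mathbb{Q})}\subseteq V(\mathbb{R})$: the local ultraproduct of the sets $V(\mathrm{F}_q)$, i.e. the image of $V(\mathrm{F})\cap(\mathrm{F}_{/\mathfrak{l}})^n$ under the coordinatewise quotient map $(\mathrm{F}_{/\mathfrak{l}})^n\to(\mathrm{F}_{/\mathfrak{l}}/\!\approx)^n\cong\mathbb{R}^n$, equals the closure in $\mathbb{R}^n$ of the set of rational points $V(\mathbb{Q})$.
   Context: $V$ is the zero set of finitely many polynomials in $\mathbb{Z}[x_1,\dots,x_n]$, and $V(R)$ denotes its set of points with coordinates in a ring $R$. Let $\mathcal{D}$ be a non-principal ultrafilter on $\mathbb{N}$ containing the set of primes, ${}^*\mathbb{Z}=\mathbb{Z}^{\mathbb{N}}/\mathcal{D}$, $\mathfrak{q}\in{}^*\mathbb{Z}$ the class of $(q)_{q\in\mathbb{N}}$, and $\mathrm{F}={}^*\mathbb{Z}/\mathfrak{q}\,{}^*\mathbb{Z}\cong\prod_{\mathcal{D}}\mathrm{F}_q$ with $\mathrm{F}_q=\mathbb{Z}/q\mathbb{Z}$. Assume there is a model ${}^f\mathbb{Z}$ of arithmetic with $\mathbb{Z}\prec{}^f\mathbb{Z}\prec{}^*\mathbb{Z}$ and $\mathfrak{q}>k$ for all $k\in{}^f\mathbb{Z}$, and let $\mathfrak{l}\in{}^f\mathbb{Z}$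 be a positive infinite integer (so $\mathfrak{l}^n<\mathfrak{q}$ for all $n\in\mathbb{N}$). For $m\in\mathbb{N}$ let $Z(m)=\{k\in{}^*\mathbb{Z}:|k|<\mathfrak{l}^m\}$ (embedded in $\mathrm{F}$ by reduction mod $\mathfrak{q}$), $S_m(\mathrm{F})=\{z\in\mathrm{F}:\exists k_1,k_2\in Z(m),k_2\ne0,\ z=k_1k_2^{-1},\ |k_1|/|k_2|\le m\}$, $\mathrm{F}_{/\mathfrak{l}}=\bigcup_mS_m(\mathrm{F})$, $\|z\|=\mathrm{st}(|k_1|/|k_2|)$ for the minimal such pair $(k_1,k_2)$, $\mathsf{d}(z_1,z_2)=\|z_1-z_2\|$, and $z_1\approx z_2$ iff $\mathsf{d}(z_1,z_2)\le 1/n$ for all $n\in\mathbb{N}$. The quotient $\mathrm{F}_{/\mathfrak{l}}/\!\approx$, with induced operations and metric, is identified with $\mathbb{R}$ (the local ultraproduct $\mathsf{lm}^{\mathrm{loc}}\mathrm{F}_q=\mathbb{R}$), and $n$-tuples are treated coordinatewise. *)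

theory Defs
  imports "HOL-Analysis.Analysis" "HOL-Computational_Algebra.Primes"
begin

type_synonym 'n zpoly = "(int \<times> ('n \<Rightarrow> nat)) list"

definition peval :: "'n::finite zpoly \<Rightarrow> ('n \<Rightarrow> 'a::comm_ring_1) \<Rightarrow> 'a" where
  "peval p x = (\<Sum>(c, e) \<leftarrow> p. of_int c * (\<Prod>i\<in>UNIV. x i ^ e i))"

definition V_real :: "'n::finite zpoly list \<Rightarrow> (real ^ 'n) set" where
  "V_real Ps = {y. \<forall>p\<in>set Ps. peval p (vec_nth y) = 0}"

definition V_rat :: "'n::finite zpoly list \<Rightarrow> (real ^ 'n) set" where
  "V_rat Ps = {y. (\<forall>i. y $ i \<in> \<rat>) \<and> (\<forall>p\<in>set Ps. peval p (vec_nth y) = 0)}"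

definition nonprincipal_ultrafilter :: "nat filter \<Rightarrow> bool" where
  "nonprincipal_ultrafilter D \<longleftrightarrow> D \<noteq> bot \<and>
     (\<forall>P. eventually P D \<or> eventually (\<lambda>x. \<not> P x) D) \<and>
     (\<forall>n. eventually (\<lambda>k. k \<noteq> n) D)"

text \<open>Elements of *Z are represented by sequences nat => int; two sequences
  represent the same element iff they agree D-almost everywhere.\<close>

datatype aterm = AVar nat | AZero | AOne | APlus aterm aterm | ATimes aterm aterm | ANeg aterm

datatype aform = AEq aterm aterm | ALess aterm aterm | ANot aform | AAnd aform aform
  | AEx nat aform

fun teval :: "aterm \<Rightarrow> (nat \<Rightarrow> (nat \<Rightarrow> int)) \<Rightarrow> (nat \<Rightarrow> int)" where
  "teval (AVar i) env = env i"
| "teval AZero env = (\<lambda>_. 0)"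
| "teval AOne env = (\<lambda>_. 1)"
| "teval (APlus s t) env = (\<lambda>q. teval s env q + teval t env q)"
| "teval (ATimes s t) env = (\<lambda>q. teval s env q * teval t env q)"
| "teval (ANeg s) env = (\<lambda>q. - teval s env q)"

fun sat :: "nat filter \<Rightarrow> (nat \<Rightarrow> int) set \<Rightarrow> aform \<Rightarrow> (nat \<Rightarrow> (nat \<Rightarrow> int)) \<Rightarrow> bool" where
  "sat D A (AEq s t) env = eventually (\<lambda>q. teval s env q = teval t env q) D"
| "sat D A (ALess s t) env = eventually (\<lambda>q. teval s env q < teval t env q) D"
| "sat D A (ANot f) env = (\<not> sat D A f env)"
| "sat D A (AAnd f g) env = (sat D A f env \<and> sat D A g env)"
| "sat D A (AEx i f) env = (\<exists>x\<in>A. sat D A f (env(i := x)))"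

text \<open>M (a set of representatives, i.e. ^fZ) is an elementary substructure of *Z
  containing Z (as constant sequences); then Z \<prec> ^fZ \<prec> *Z.\<close>
definition elem_sub_containing_Z :: "nat filter \<Rightarrow> (nat \<Rightarrow> int) set \<Rightarrow> bool" where
  "elem_sub_containing_Z D M \<longleftrightarrow>
     (\<forall>c::int. (\<lambda>_. c) \<in> M) \<and>
     (\<forall>f env. (\<forall>i. env i \<in> M) \<longrightarrow> (sat D M f env \<longleftrightarrow> sat D UNIV f env))"

text \<open>a (representing an element of F) lies in S_m(F), witnessed by k1, k2 in Z(m):
  z = k1 k2^{-1} in F (stated as z*k2 = k1, k2 being a unit in F), k2 \<noteq> 0, |k1|/|k2| \<le> m.\<close>
definition in_S :: "nat filter \<Rightarrow> (nat \<Rightarrow> int) \<Rightarrow> nat \<Rightarrow> (nat \<Rightarrow> int)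
                    \<Rightarrow> (nat \<Rightarrow> int) \<Rightarrow> (nat \<Rightarrow> int) \<Rightarrow> bool" where
  "in_S D l m a k1 k2 \<longleftrightarrow> eventually (\<lambda>q.
      \<bar>k1 q\<bar> < l q ^ m \<and> \<bar>k2 q\<bar> < l q ^ m \<and> k2 q \<noteq> 0 \<and>
      \<bar>k1 q\<bar> \<le> int m * \<bar>k2 q\<bar> \<and> (a q * k2 q) mod int q = k1 q mod int q) D"

text \<open>Standard part of the hyperrational k1/k2: the real number r with
  |k1/k2 - r| < eps for every standard eps > 0, i.e. the D-limit.\<close>
definition st_ratio :: "nat filter \<Rightarrow> (nat \<Rightarrow> int) \<Rightarrow> (nat \<Rightarrow> int) \<Rightarrow> real" where
  "st_ratio D k1 k2 = (THE r. ((\<lambda>q. real_of_int (k1 q) / real_of_int (k2 q)) \<longlongrightarrow> r) D)"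

definition in_V_F :: "nat filter \<Rightarrow> 'n::finite zpoly list \<Rightarrow> ('n \<Rightarrow> (nat \<Rightarrow> int)) \<Rightarrow> bool" where
  "in_V_F D Ps x \<longleftrightarrow> eventually (\<lambda>q. \<forall>p\<in>set Ps. peval p (\<lambda>i. x i q) mod int q = 0) D"

text \<open>lm^loc V(F_q): image of V(F) \<inter> (F_{/l})^n under the coordinatewise map
  F_{/l} \<rightarrow> F_{/l}/\<approx> = R, z = k1/k2 \<mapsto> st(k1/k2).\<close>
definition lm_loc :: "nat filter \<Rightarrow> (nat \<Rightarrow> int) \<Rightarrow> 'n::finite zpoly list \<Rightarrow> (real ^ 'n) set" where
  "lm_loc D l Ps = {y. \<exists>x. in_V_F D Ps x \<and>
      (\<forall>i. \<exists>m k1 k2. in_S D l m (x i) k1 k2 \<and> y $ i = st_ratio D k1 k2)}"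

end

theory Submission imports Defs "HOL-Number_Theory.Number_Theory" begin

definition hom :: "'n::finite zpoly \<Rightarrow> nat \<Rightarrow> ('n \<Rightarrow> 'a::comm_ring_1) \<Rightarrow> ('n \<Rightarrow> 'a) \<Rightarrow> 'a" where
  "hom p E a b = (\<Sum>(c, e) \<leftarrow> p. of_int c * (\<Prod>i\<in>UNIV. a i ^ e i * b i ^ (E - e i)))"

lemma peval_Nil[simp]: "peval [] x = 0" by (simp add: peval_def)
lemma peval_Cons[simp]: "peval ((c,e)#p) x = of_int c * (\<Prod>i\<in>UNIV. x i ^ e i) + peval p x"
  by (simp add: peval_def)
lemma hom_Nil[simp]: "hom [] E a b = 0" by (simp add: hom_def)
lemma hom_Cons[simp]: "hom ((c,e)#p) E a b = of_int c * (\<Prod>i\<in>UNIV. a i ^ e i * b i ^ (E - e i)) + hom p E a b"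
  by (simp add: hom_def)

definition Eb :: "'n::finite zpoly \<Rightarrow> nat" where
  "Eb p = sum_list (map (\<lambda>(c,e). \<Sum>i\<in>UNIV. e i) p)"

lemma Eb_le: "(c,e) \<in> set p \<Longrightarrow> e i \<le> Eb p"
proof -
  assume h: "(c,e) \<in> set p"
  have "e i \<le> (\<Sum>i\<in>UNIV. e i)" by (rule member_le_sum) auto
  also have "\<dots> \<le> Eb p" unfolding Eb_def
    by (rule member_le_sum_list) (use h in force, simp)
  finally show ?thesis .
qed

lemma hom_field:
  fixes a b :: "'n::finite \<Rightarrow> 'a::field"
  assumes "\<forall>(c,e)\<in>set p. \<forall>i. e i \<le> E" "\<forall>i. b i \<noteq> 0"
  shows "hom p E a b = (\<Prod>i\<in>UNIV. b i ^ E) * peval p (\<lambda>i. a i / b i)"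
  using assms(1)
proof (induction p)
  case Nil then show ?case by simp
next
  case (Cons ce p)
  obtain c e where ce: "ce = (c,e)" by force
  have "\<And>i. a i ^ e i * b i ^ (E - e i) = b i ^ E * (a i / b i) ^ e i"
  proof -
    fix i
    have "E = e i + (E - e i)" using Cons.prems ce by auto
    then have "b i ^ E = b i ^ e i * b i ^ (E - e i)" by (metis power_add)
    then show "a i ^ e i * b i ^ (E - e i) = b i ^ E * (a i / b i) ^ e i"
      using assms(2) by (simp add: power_divide field_simps)
  qed
  then have "(\<Prod>i\<in>UNIV. a i ^ e i * b i ^ (E - e i)) = (\<Prod>i\<in>UNIV. b i ^ E) * (\<Prod>i\<in>UNIV. (a i / b i) ^ e i)"
    by (simp add: prod.distrib)
  then show ?case using Cons ce by (simp add: algebra_simps)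
qed

lemma hom_cong:
  fixes a b x :: "'n::finite \<Rightarrow> int"
  assumes "\<forall>(c,e)\<in>set p. \<forall>i. e i \<le> E" "\<forall>i. [x i * b i = a i] (mod q)"
  shows "[hom p E a b = (\<Prod>i\<in>UNIV. b i ^ E) * peval p x] (mod q)"
  using assms(1)
proof (induction p)
  case Nil then show ?case by simp
next
  case (Cons ce p)
  obtain c e where ce: "ce = (c,e)" by force
  have "\<And>i. [a i ^ e i * b i ^ (E - e i) = b i ^ E * x i ^ e i] (mod q)"
  proof -
    fix i
    have "E = e i + (E - e i)" using Cons.prems ce by auto
    then have "b i ^ E = b i ^ e i * b i ^ (E - e i)" by (metis power_add)
    then have eq: "b i ^ E * x i ^ e i = (x i * b i) ^ e i * b i ^ (E - e i)"
      by (simp add: power_mult_distrib algebra_simps)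
    have "[a i ^ e i * b i ^ (E - e i) = (x i * b i) ^ e i * b i ^ (E - e i)] (mod q)"
      by (intro cong_mult cong_pow cong_refl) (use assms(2) in \<open>simp add: cong_sym\<close>)
    then show "[a i ^ e i * b i ^ (E - e i) = b i ^ E * x i ^ e i] (mod q)" by (simp add: eq)
  qed
  then have "[(\<Prod>i\<in>UNIV. a i ^ e i * b i ^ (E - e i)) = (\<Prod>i\<in>UNIV. b i ^ E * x i ^ e i)] (mod q)"
    by (intro cong_prod) auto
  then have "[(\<Prod>i\<in>UNIV. a i ^ e i * b i ^ (E - e i)) = (\<Prod>i\<in>UNIV. b i ^ E) * (\<Prod>i\<in>UNIV. x i ^ e i)] (mod q)"
    by (simp add: prod.distrib)
  then have "[of_int c * (\<Prod>i\<in>UNIV. a i ^ e i * b i ^ (E - e i)) + hom p E a b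
     = of_int c * ((\<Prod>i\<in>UNIV. b i ^ E) * (\<Prod>i\<in>UNIV. x i ^ e i)) + (\<Prod>i\<in>UNIV. b i ^ E) * peval p x] (mod q)"
    using Cons by (intro cong_add cong_mult cong_refl) auto
  then show ?case using ce by (simp add: algebra_simps)
qed

lemma hom_bound:
  fixes a b :: "'n::finite \<Rightarrow> int"
  assumes "\<forall>(c,e)\<in>set p. \<forall>i. e i \<le> E" "\<forall>i. \<bar>a i\<bar> \<le> B \<and> \<bar>b i\<bar> \<le> B"
  shows "\<bar>hom p E a b\<bar> \<le> (\<Sum>(c,e)\<leftarrow>p. \<bar>c\<bar>) * B ^ (E * CARD('n))"
  using assms(1)
proof (induction p)
  case Nil then show ?case by simp
next
  case (Cons ce p)
  obtain c e where ce: "ce = (c,e)" by force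
  have B0: "0 \<le> B" using assms(2) by (meson abs_ge_zero order_trans)
  have "\<bar>\<Prod>i\<in>UNIV. a i ^ e i * b i ^ (E - e i)\<bar> = (\<Prod>i\<in>UNIV. \<bar>a i\<bar> ^ e i * \<bar>b i\<bar> ^ (E - e i))"
    by (simp add: abs_prod abs_mult power_abs)
  also have "\<dots> \<le> (\<Prod>i\<in>(UNIV::'n set). B ^ E)"
  proof (rule prod_mono, safe)
    fix i
    have "E = e i + (E - e i)" using Cons.prems ce by auto
    then have "B ^ E = B ^ e i * B ^ (E - e i)" by (metis power_add)
    moreover have "\<bar>a i\<bar> ^ e i * \<bar>b i\<bar> ^ (E - e i) \<le> B ^ e i * B ^ (E - e i)"
      using assms(2) by (intro mult_mono power_mono) (auto simp: B0)
    ultimately show "\<bar>a i\<bar> ^ e i * \<bar>b i\<bar> ^ (E - e i) \<le> B ^ E" by simp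
  qed simp
  also have "\<dots> = B ^ (E * CARD('n))" by (simp add: power_mult)
  finally have m: "\<bar>\<Prod>i\<in>UNIV. a i ^ e i * b i ^ (E - e i)\<bar> \<le> B ^ (E * CARD('n))" .
  have "\<bar>of_int c * (\<Prod>i\<in>UNIV. a i ^ e i * b i ^ (E - e i))\<bar> \<le> \<bar>c\<bar> * B ^ (E * CARD('n))"
    using m by (simp add: abs_mult mult_left_mono)
  moreover have "\<bar>hom p E a b\<bar> \<le> (\<Sum>(c,e)\<leftarrow>p. \<bar>c\<bar>) * B ^ (E * CARD('n))" using Cons ce by auto
  ultimately show ?case using ce by (simp add: algebra_simps abs_triangle_ineq order_trans[OF abs_triangle_ineq])
qed

lemma hom_of_int:
  "(of_int (hom p E a b) :: 'a::comm_ring_1) = hom p E (\<lambda>i. of_int (a i)) (\<lambda>i. of_int (b i))"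
proof (induction p)
  case Nil then show ?case by simp
next
  case (Cons ce p)
  obtain c e where ce: "ce = (c,e)" by force
  then show ?case using Cons by (simp add: of_int_prod)
qed


lemma uf_lim:
  fixes f :: "nat \<Rightarrow> real"
  assumes U: "nonprincipal_ultrafilter D" and bd: "eventually (\<lambda>q. \<bar>f q\<bar> \<le> m) D"
  shows "\<exists>L. (f \<longlongrightarrow> L) D"
proof -
  have nb: "D \<noteq> bot" and uf: "\<And>P. eventually P D \<or> eventually (\<lambda>x. \<not> P x) D"
    using U unfolding nonprincipal_ultrafilter_def by auto
  define T where "T = {t. eventually (\<lambda>q. f q \<ge> t) D}"
  have mT: "-m \<in> T" unfolding T_def using bd by (auto elim: eventually_mono)
  have Tb: "t \<le> m" if "t \<in> T" for t
  proof (rule ccontr)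
    assume "\<not> t \<le> m"
    then have "eventually (\<lambda>q. False) D" using that bd unfolding T_def
      by (auto elim: eventually_elim2)
    then show False using nb by (simp add: eventually_False)
  qed
  define L where "L = Sup T"
  have bddT: "bdd_above T" using Tb by (auto simp: bdd_above_def)
  have "(f \<longlongrightarrow> L) D"
  proof (rule order_tendstoI)
    fix a assume "a < L"
    then obtain t where "t \<in> T" "a < t" unfolding L_def using mT
      using less_cSup_iff[of T a] bddT by blast
    then show "eventually (\<lambda>q. a < f q) D" unfolding T_def
      by (auto elim: eventually_mono)
  next
    fix a assume "L < a"
    define b where "b = (L + a) / 2"
    have "b \<notin> T"
    proof
      assume "b \<in> T" then have "b \<le> L" unfolding L_def using bddT by (simp add: cSup_upper)
      then show False using \<open>L < a\<close> b_def by simp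
    qed
    then have "eventually (\<lambda>q. \<not> f q \<ge> b) D" using uf[of "\<lambda>q. f q \<ge> b"] unfolding T_def by auto
    then show "eventually (\<lambda>q. f q < a) D"
      by (rule eventually_mono) (use \<open>L < a\<close> b_def in auto)
  qed
  then show ?thesis by blast
qed

lemma uf_st:
  assumes "nonprincipal_ultrafilter D" "((\<lambda>q. real_of_int (k1 q) / real_of_int (k2 q)) \<longlongrightarrow> L) D"
  shows "st_ratio D k1 k2 = L"
proof -
  have nb: "D \<noteq> bot" using assms(1) unfolding nonprincipal_ultrafilter_def by auto
  show ?thesis unfolding st_ratio_def
    using assms(2) tendsto_unique[OF nb] by blast
qed

fun tpow :: "aterm \<Rightarrow> nat \<Rightarrow> aterm" where
  "tpow t 0 = AOne"
| "tpow t (Suc n) = ATimes t (tpow t n)"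

lemma teval_tpow: "teval (tpow t n) env = (\<lambda>q. teval t env q ^ n)"
  by (induction n) auto

lemma M_pow:
  assumes "elem_sub_containing_Z D M" "l \<in> M"
  shows "\<exists>z\<in>M. eventually (\<lambda>q. z q = c * l q ^ K) D"
proof -
  define env where "env = (\<lambda>_::nat. l)(1 := (\<lambda>_. c))"
  have envM: "\<forall>i. env i \<in> M" using assms unfolding env_def elem_sub_containing_Z_def by auto
  define f where "f = AEx 0 (AEq (AVar 0) (ATimes (AVar 1) (tpow (AVar 2) K)))"
  have "sat D UNIV f env"
    unfolding f_def by (auto simp: teval_tpow env_def intro!: exI[of _ "\<lambda>q. c * l q ^ K"])
  then have "sat D M f env" using assms(1) envM unfolding elem_sub_containing_Z_def by blast
  then show ?thesis unfolding f_def by (auto simp: teval_tpow env_def)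
qed


lemma dir1:
  fixes Ps :: "'n::finite zpoly list"
  assumes U: "nonprincipal_ultrafilter D"
    and EM: "elem_sub_containing_Z D M"
    and kq: "\<forall>k\<in>M. eventually (\<lambda>q. k q < int q) D"
    and lM: "l \<in> M"
    and hl: "\<forall>c::int. eventually (\<lambda>q. c < l q) D"
    and yin: "y \<in> lm_loc D l Ps"
  shows "y \<in> closure (V_rat Ps)"
proof -
  have nb: "D \<noteq> bot" using U unfolding nonprincipal_ultrafilter_def by auto
  obtain x where xV: "in_V_F D Ps x" and
    cx: "\<forall>i. \<exists>m k1 k2. in_S D l m (x i) k1 k2 \<and> y $ i = st_ratio D k1 k2"
    using yin unfolding lm_loc_def by auto
  obtain m k1 k2 where h: "\<And>i. in_S D l (m i) (x i) (k1 i) (k2 i) \<and> y $ i = st_ratio D (k1 i) (k2 i)"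
    using cx by metis
  define Mx where "Mx = Max (range m)"
  have mMx: "m i \<le> Mx" for i unfolding Mx_def by simp
  define r where "r q = (\<chi> i. real_of_int (k1 i q) / real_of_int (k2 i q))" for q
  have evS: "eventually (\<lambda>q. \<forall>i. \<bar>k1 i q\<bar> < l q ^ m i \<and> \<bar>k2 i q\<bar> < l q ^ m i \<and> k2 i q \<noteq> 0 \<and>
      \<bar>k1 i q\<bar> \<le> int (m i) * \<bar>k2 i q\<bar> \<and> (x i q * k2 i q) mod int q = k1 i q mod int q) D"
    by (rule eventually_all_finite) (use h in \<open>auto simp: in_S_def\<close>)
  have lim_i: "((\<lambda>q. real_of_int (k1 i q) / real_of_int (k2 i q)) \<longlongrightarrow> y $ i) D" for i
  proof -
    have "eventually (\<lambda>q. \<bar>real_of_int (k1 i q) / real_of_int (k2 i q)\<bar> \<le> real (m i)) D"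
    proof (rule eventually_mono[OF evS])
      fix q assume "\<forall>i. \<bar>k1 i q\<bar> < l q ^ m i \<and> \<bar>k2 i q\<bar> < l q ^ m i \<and> k2 i q \<noteq> 0 \<and>
        \<bar>k1 i q\<bar> \<le> int (m i) * \<bar>k2 i q\<bar> \<and> (x i q * k2 i q) mod int q = k1 i q mod int q"
      then have a: "k2 i q \<noteq> 0" "\<bar>k1 i q\<bar> \<le> int (m i) * \<bar>k2 i q\<bar>" by auto
      then have "real_of_int \<bar>k1 i q\<bar> \<le> real (m i) * real_of_int \<bar>k2 i q\<bar>"
        by (metis of_int_le_iff of_int_mult of_int_of_nat_eq)
      moreover have "0 < \<bar>real_of_int (k2 i q)\<bar>" using a(1) by simp
      ultimately show "\<bar>real_of_int (k1 i q) / real_of_int (k2 i q)\<bar> \<le> real (m i)"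
        by (simp only: abs_divide pos_divide_le_eq of_int_abs)
    qed
    then have "\<exists>L. ((\<lambda>q. real_of_int (k1 i q) / real_of_int (k2 i q)) \<longlongrightarrow> L) D"
      by (rule uf_lim[OF U])
    then obtain L where L: "((\<lambda>q. real_of_int (k1 i q) / real_of_int (k2 i q)) \<longlongrightarrow> L) D"
      by blast
    have "y $ i = L" using h[of i] uf_st[OF U L] by simp
    then show ?thesis using L by simp
  qed
  have rlim: "(r \<longlongrightarrow> y) D"
    by (rule vec_tendstoI) (simp add: r_def lim_i)
  define K where "K p = Mx * (Eb p * CARD('n))" for p :: "'n zpoly"
  define C where "C p = (\<Sum>(c,e)\<leftarrow>p. \<bar>c\<bar>)" for p :: "'n zpoly"
  have "\<forall>p. \<exists>z. z \<in> M \<and> eventually (\<lambda>q. z q = C p * l q ^ K p) D"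
    using M_pow[OF EM lM] by blast
  then obtain z where zM: "\<And>p. z p \<in> M" and zeq: "\<And>p. eventually (\<lambda>q. z p q = C p * l q ^ K p) D"
    by metis
  have evz: "eventually (\<lambda>q. \<forall>p\<in>set Ps. z p q = C p * l q ^ K p \<and> z p q < int q) D"
    by (rule eventually_ball_finite) (use zM zeq kq in \<open>auto intro: eventually_conj\<close>)
  have evV: "eventually (\<lambda>q. \<forall>p\<in>set Ps. peval p (\<lambda>i. x i q) mod int q = 0) D"
    using xV unfolding in_V_F_def .
  have "eventually (\<lambda>q. r q \<in> V_rat Ps) D"
  proof (rule eventually_mono[OF eventually_conj[OF eventually_conj[OF evS evz] eventually_conj[OF evV hl[rule_format, of 0]]]])
    fix q assume A: "((\<forall>i. \<bar>k1 i q\<bar> < l q ^ m i \<and> \<bar>k2 i q\<bar> < l q ^ m i \<and> k2 i q \<noteq> 0 \<and>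
      \<bar>k1 i q\<bar> \<le> int (m i) * \<bar>k2 i q\<bar> \<and> (x i q * k2 i q) mod int q = k1 i q mod int q) \<and>
      (\<forall>p\<in>set Ps. z p q = C p * l q ^ K p \<and> z p q < int q)) \<and>
      (\<forall>p\<in>set Ps. peval p (\<lambda>i. x i q) mod int q = 0) \<and> 0 < l q"
    define a where "a i = k1 i q" for i
    define b where "b i = k2 i q" for i
    have b0: "b i \<noteq> 0" for i using A b_def by auto
    have cg: "\<forall>i. [x i q * b i = a i] (mod int q)" using A a_def b_def by (auto simp: cong_def)
    have lpow: "l q ^ m i \<le> l q ^ Mx" for i using A mMx by (intro power_increasing) auto
    have ab: "\<forall>i. \<bar>a i\<bar> \<le> l q ^ Mx \<and> \<bar>b i\<bar> \<le> l q ^ Mx"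
    proof
      fix i
      have "\<bar>k1 i q\<bar> < l q ^ m i" "\<bar>k2 i q\<bar> < l q ^ m i" using A by auto
      then show "\<bar>a i\<bar> \<le> l q ^ Mx \<and> \<bar>b i\<bar> \<le> l q ^ Mx"
        using lpow[of i] a_def b_def by simp
    qed
    have vn: "vec_nth (r q) = (\<lambda>i. real_of_int (a i) / real_of_int (b i))"
      by (auto simp: r_def a_def b_def)
    have "peval p (vec_nth (r q)) = 0" if pP: "p \<in> set Ps" for p
    proof -
      have Eb: "\<forall>(c,e)\<in>set p. \<forall>i. e i \<le> Eb p" using Eb_le by blast
      have "[hom p (Eb p) a b = (\<Prod>i\<in>UNIV. b i ^ Eb p) * peval p (\<lambda>i. x i q)] (mod int q)"
        by (rule hom_cong[OF Eb cg])
      moreover have "[peval p (\<lambda>i. x i q) = 0] (mod int q)" using A pP by (simp add: cong_def)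
      ultimately have "[hom p (Eb p) a b = 0] (mod int q)"
        by (metis cong_scalar_left cong_trans mult_zero_right)
      then have dv: "int q dvd hom p (Eb p) a b" by (simp add: cong_0_iff)
      have "\<bar>hom p (Eb p) a b\<bar> \<le> C p * (l q ^ Mx) ^ (Eb p * CARD('n))"
        unfolding C_def by (rule hom_bound[OF Eb ab])
      also have "\<dots> = z p q" using A pP by (simp add: K_def power_mult)
      also have "\<dots> < int q" using A pP by auto
      finally have lt: "\<bar>hom p (Eb p) a b\<bar> < int q" .
      have G0: "hom p (Eb p) a b = 0"
      proof (rule ccontr)
        assume ne: "hom p (Eb p) a b \<noteq> 0"
        have "\<bar>int q\<bar> \<le> \<bar>hom p (Eb p) a b\<bar>" by (rule dvd_imp_le_int[OF ne dv])
        then show False using lt by simp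
      qed
      have "(0::real) = of_int (hom p (Eb p) a b)" using G0 by simp
      also have "\<dots> = hom p (Eb p) (\<lambda>i. real_of_int (a i)) (\<lambda>i. real_of_int (b i))"
        by (rule hom_of_int)
      also have "\<dots> = (\<Prod>i\<in>UNIV. real_of_int (b i) ^ Eb p) * peval p (\<lambda>i. real_of_int (a i) / real_of_int (b i))"
        by (rule hom_field) (use Eb b0 in auto)
      finally show ?thesis using b0 vn by simp
    qed
    moreover have "\<forall>i. r q $ i \<in> \<rat>" by (simp add: r_def)
    ultimately show "r q \<in> V_rat Ps" unfolding V_rat_def by auto
  qed
  then have "eventually (\<lambda>q. r q \<in> closure (V_rat Ps)) D"
    by (rule eventually_mono) (use closure_subset in auto)
  then show ?thesis using Lim_in_closed_set[OF closed_closure _ nb rlim] by blast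
qed


lemma inv_mod:
  assumes "prime (q::nat)" "\<not> int q dvd b"
  shows "\<exists>t. [t * b = a] (mod int q)"
proof -
  have "prime (int q)" using assms(1) by simp
  then have "coprime (int q) b" using assms(2) by (rule prime_imp_coprime)
  then have "coprime b (int q)" by (simp add: coprime_commute)
  then obtain u where u: "[b * u = 1] (mod int q)" using cong_solve_coprime_int by blast
  have "[a * (b * u) = a * 1] (mod int q)" by (rule cong_scalar_left[OF u])
  then have "[(a * u) * b = a] (mod int q)" by (simp add: algebra_simps)
  then show ?thesis by blast
qed

lemma ev_ge:
  assumes U: "nonprincipal_ultrafilter D"
  shows "eventually (\<lambda>q. n0 \<le> q) D"
proof -
  have "\<forall>j. eventually (\<lambda>k. k \<noteq> j) D" using U unfolding nonprincipal_ultrafilter_def by auto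
  then have "eventually (\<lambda>k. \<forall>j\<in>{..<n0}. k \<noteq> j) D"
    by (intro eventually_ball_finite) auto
  then show ?thesis by (rule eventually_mono) (auto simp: not_less[symmetric])
qed

lemma dir2:
  fixes Ps :: "'n::finite zpoly list"
  assumes U: "nonprincipal_ultrafilter D"
    and pr: "eventually (\<lambda>q. prime q) D"
    and lq: "eventually (\<lambda>q. l q < int q) D"
    and hl: "\<forall>c::int. eventually (\<lambda>q. c < l q) D"
    and yin: "y \<in> closure (V_rat Ps)"
  shows "y \<in> lm_loc D l Ps"
proof -
  obtain s where sV: "\<And>n. s n \<in> V_rat Ps" and slim: "s \<longlonglongrightarrow> y"
    using yin unfolding closure_sequential by blast
  have "\<forall>n i. \<exists>a b. b > 0 \<and> s n $ i = real_of_int a / real_of_int b"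
  proof (intro allI)
    fix n i
    have "s n $ i \<in> \<rat>" using sV[of n] unfolding V_rat_def by auto
    then show "\<exists>a b. b > 0 \<and> s n $ i = real_of_int a / real_of_int b"
      by (elim Rats_cases') blast
  qed
  then obtain an bn where abn: "\<And>n i. bn n i > 0 \<and> s n $ i = real_of_int (an n i) / real_of_int (bn n i)"
    by metis
  define ht where "ht n = Max (range (\<lambda>i. max \<bar>an n i\<bar> (bn n i)))" for n
  have ht_ge: "\<bar>an n i\<bar> \<le> ht n \<and> bn n i \<le> ht n" for n i
  proof -
    have "max \<bar>an n i\<bar> (bn n i) \<le> ht n" unfolding ht_def by (rule Max_ge) auto
    then show ?thesis by simp
  qed
  define S where "S q = {n. n \<le> q \<and> ht n < l q}" for q
  define N where "N q = Max (S q)" for q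
  have finS: "finite (S q)" for q unfolding S_def by auto
  have inS: "eventually (\<lambda>q. n0 \<in> S q) D" for n0
    using eventually_conj[OF ev_ge[OF U, of n0] hl[rule_format, of "ht n0"]]
    by (rule eventually_mono) (simp add: S_def)
  have Nge: "eventually (\<lambda>q. n0 \<le> N q) D" for n0
    by (rule eventually_mono[OF inS[of n0]]) (simp add: N_def finS)
  have NS: "eventually (\<lambda>q. N q \<in> S q) D"
    by (rule eventually_mono[OF inS[of 0]]) (unfold N_def, intro Max_in finS, blast)
  have Nlim: "filterlim N sequentially D"
    unfolding filterlim_at_top using Nge by blast
  define k1 where "k1 i q = an (N q) i" for i q
  define k2 where "k2 i q = bn (N q) i" for i q
  have ratio: "real_of_int (k1 i q) / real_of_int (k2 i q) = s (N q) $ i" for i q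
    using abn unfolding k1_def k2_def by simp
  have rlim: "((\<lambda>q. real_of_int (k1 i q) / real_of_int (k2 i q)) \<longlongrightarrow> y $ i) D" for i
  proof -
    have "((\<lambda>n. s n $ i) \<longlongrightarrow> y $ i) sequentially" by (intro tendsto_vec_nth slim)
    from filterlim_compose[OF this Nlim] show ?thesis by (simp add: ratio)
  qed
  define m where "m i = nat \<lceil>\<bar>y $ i\<bar>\<rceil> + 1" for i
  have m1: "1 \<le> m i" for i unfolding m_def by simp
  have ym: "\<bar>y $ i\<bar> + 1 \<le> real (m i)" for i
    unfolding m_def by (simp add: of_nat_nat)
  have evm: "eventually (\<lambda>q. \<bar>k1 i q\<bar> \<le> int (m i) * \<bar>k2 i q\<bar>) D" for i
  proof -
    have e1: "eventually (\<lambda>q. s (N q) $ i < y $ i + 1) D"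
      using order_tendstoD(2)[OF rlim[of i], of "y $ i + 1"] by (simp add: ratio)
    have e2: "eventually (\<lambda>q. y $ i - 1 < s (N q) $ i) D"
      using order_tendstoD(1)[OF rlim[of i], of "y $ i - 1"] by (simp add: ratio)
    show ?thesis
    proof (rule eventually_mono[OF eventually_conj[OF e1 e2]])
      fix q assume "s (N q) $ i < y $ i + 1 \<and> y $ i - 1 < s (N q) $ i"
      then have "\<bar>s (N q) $ i\<bar> \<le> real (m i)" using ym[of i] by linarith
      then have "\<bar>real_of_int (k1 i q)\<bar> / \<bar>real_of_int (k2 i q)\<bar> \<le> real (m i)"
        by (simp add: ratio[symmetric] abs_divide)
      moreover have "0 < \<bar>real_of_int (k2 i q)\<bar>" using abn unfolding k2_def by (simp add: less_imp_neq[symmetric])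
      ultimately have "\<bar>real_of_int (k1 i q)\<bar> \<le> real (m i) * \<bar>real_of_int (k2 i q)\<bar>"
        by (simp add: pos_divide_le_eq)
      then have "real_of_int \<bar>k1 i q\<bar> \<le> real_of_int (int (m i) * \<bar>k2 i q\<bar>)" by simp
      then show "\<bar>k1 i q\<bar> \<le> int (m i) * \<bar>k2 i q\<bar>" by (simp only: of_int_le_iff)
    qed
  qed
  define x where "x i q = (SOME t. [t * k2 i q = k1 i q] (mod int q))" for i q
  define good where "good q \<longleftrightarrow> prime q \<and> l q < int q \<and> N q \<in> S q \<and> 0 < l q" for q
  have evgood: "eventually good D"
    unfolding good_def
    by (intro eventually_conj pr lq NS hl[rule_format, of 0])
  have gk: "0 < k2 i q \<and> k2 i q < l q \<and> \<bar>k1 i q\<bar> < l q \<and> \<not> int q dvd k2 i q" if "good q" for i q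
  proof -
    have "ht (N q) < l q" "l q < int q" using that unfolding good_def S_def by auto
    moreover have "0 < k2 i q" using abn unfolding k2_def by auto
    moreover have "k2 i q \<le> ht (N q)" "\<bar>k1 i q\<bar> \<le> ht (N q)" using ht_ge unfolding k1_def k2_def by auto
    ultimately have "0 < k2 i q \<and> k2 i q < l q \<and> \<bar>k1 i q\<bar> < l q \<and> k2 i q < int q" by auto
    then show ?thesis by (auto dest: zdvd_imp_le)
  qed
  have gx: "[x i q * k2 i q = k1 i q] (mod int q)" if "good q" for i q
  proof -
    have "\<exists>t. [t * k2 i q = k1 i q] (mod int q)"
      using inv_mod gk[OF that, of i] that unfolding good_def by blast
    then show ?thesis unfolding x_def by (rule someI_ex)
  qed
  have inS_all: "in_S D l (m i) (x i) (k1 i) (k2 i)" for i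
    unfolding in_S_def
  proof (rule eventually_mono[OF eventually_conj[OF evgood evm[of i]]])
    fix q assume A: "good q \<and> \<bar>k1 i q\<bar> \<le> int (m i) * \<bar>k2 i q\<bar>"
    have lp: "l q \<le> l q ^ m i"
    proof -
      have "l q ^ 1 \<le> l q ^ m i" using A m1[of i] unfolding good_def by (intro power_increasing) auto
      then show ?thesis by simp
    qed
    show "\<bar>k1 i q\<bar> < l q ^ m i \<and> \<bar>k2 i q\<bar> < l q ^ m i \<and> k2 i q \<noteq> 0 \<and>
      \<bar>k1 i q\<bar> \<le> int (m i) * \<bar>k2 i q\<bar> \<and> (x i q * k2 i q) mod int q = k1 i q mod int q"
      using gk[of q i] gx[of q i] A lp by (auto simp: cong_def)
  qed
  have st: "y $ i = st_ratio D (k1 i) (k2 i)" for i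
    using uf_st[OF U rlim[of i]] by simp
  have xV: "in_V_F D Ps x"
    unfolding in_V_F_def
  proof (rule eventually_mono[OF evgood], intro ballI)
    fix q p assume g: "good q" and pP: "p \<in> set Ps"
    define a where "a i = k1 i q" for i
    define b where "b i = k2 i q" for i
    have Eb: "\<forall>(c,e)\<in>set p. \<forall>i. e i \<le> Eb p" using Eb_le by blast
    have b0: "\<forall>i. b i \<noteq> 0" using gk[OF g] b_def by (metis less_irrefl)
    have vn: "(\<lambda>i. real_of_int (a i) / real_of_int (b i)) = vec_nth (s (N q))"
      using ratio a_def b_def by auto
    have "of_int (hom p (Eb p) a b) = hom p (Eb p) (\<lambda>i. real_of_int (a i)) (\<lambda>i. real_of_int (b i))"
      by (rule hom_of_int)
    also have "\<dots> = (\<Prod>i\<in>UNIV. real_of_int (b i) ^ Eb p) * peval p (\<lambda>i. real_of_int (a i) / real_of_int (b i))"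
      by (rule hom_field) (use Eb b0 in auto)
    also have "\<dots> = 0" using sV[of "N q"] pP unfolding vn V_rat_def by auto
    finally have G0: "hom p (Eb p) a b = 0" by simp
    have cg: "\<forall>i. [x i q * b i = a i] (mod int q)" using gx[OF g] a_def b_def by auto
    have "[hom p (Eb p) a b = (\<Prod>i\<in>UNIV. b i ^ Eb p) * peval p (\<lambda>i. x i q)] (mod int q)"
      by (rule hom_cong[OF Eb cg])
    then have dv: "int q dvd (\<Prod>i\<in>UNIV. b i ^ Eb p) * peval p (\<lambda>i. x i q)"
      using G0 cong_sym cong_0_iff by fastforce
    have piq: "prime (int q)" using g unfolding good_def by simp
    have "\<not> int q dvd (\<Prod>i\<in>UNIV. b i ^ Eb p)"
    proof
      assume "int q dvd (\<Prod>i\<in>UNIV. b i ^ Eb p)"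
      then obtain i where "int q dvd b i ^ Eb p" using prime_dvd_prod_iff[OF finite piq, of "\<lambda>i. b i ^ Eb p"] by auto
      then have "int q dvd b i" using prime_dvd_power[OF piq] by blast
      then show False using gk[OF g, of i] b_def by simp
    qed
    then have "int q dvd peval p (\<lambda>i. x i q)" using dv prime_dvd_mult_iff[OF piq] by blast
    then show "peval p (\<lambda>i. x i q) mod int q = 0" by simp
  qed
  show ?thesis unfolding lm_loc_def using xV inS_all st by blast
qed

lemma cont_peval: "continuous_on UNIV (\<lambda>y::real^'n::finite. peval p (vec_nth y))"
proof (induction p)
  case Nil then show ?case by simp
next
  case (Cons ce p)
  obtain c e where ce: "ce = (c,e)" by force
  show ?case unfolding ce peval_Cons
    by (intro continuous_intros Cons.IH)
qed

lemma closed_V_real: "closed (V_real Ps)"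
proof -
  have "V_real Ps = (\<Inter>p\<in>set Ps. {y. peval p (vec_nth y) = 0})"
    unfolding V_real_def by auto
  moreover have "closed (\<Inter>p\<in>set Ps. {y::real^'a. peval p (vec_nth y) = 0})"
    by (intro closed_INT ballI closed_Collect_eq cont_peval continuous_on_const)
  ultimately show ?thesis by simp
qed

theorem proposition3p7:
  fixes D :: "nat filter" and M :: "(nat \<Rightarrow> int) set" and l :: "nat \<Rightarrow> int"
    and Ps :: "'n::finite zpoly list"
  assumes "nonprincipal_ultrafilter D"
    and "eventually (\<lambda>q. prime q) D"
    and "elem_sub_containing_Z D M"
    and "\<forall>k\<in>M. eventually (\<lambda>q. k q < int q) D"
    and "l \<in> M"
    and "\<forall>c::int. eventually (\<lambda>q. c < l q) D"
  shows "lm_loc D l Ps = closure (V_rat Ps) \<and> closure (V_rat Ps) \<subseteq> V_real Ps"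
proof (intro conjI)
  have lq: "eventually (\<lambda>q. l q < int q) D" using assms(4,5) by blast
  show "lm_loc D l Ps = closure (V_rat Ps)"
  proof
    show "lm_loc D l Ps \<subseteq> closure (V_rat Ps)"
      using dir1[OF assms(1,3,4,5,6)] by blast
    show "closure (V_rat Ps) \<subseteq> lm_loc D l Ps"
      using dir2[OF assms(1,2) lq assms(6)] by blast
  qed
  show "closure (V_rat Ps) \<subseteq> V_real Ps"
    by (rule closure_minimal) (auto simp: V_rat_def V_real_def intro: closed_V_real[unfolded V_real_def])
qed

end
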